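(* For $x\in(0,1)$ let $I(x,1)=\exp\!\big(\frac{x\ln x}{x-1}-1\big)$ and $A_p(x,1)=\big(\frac{x^p+1}{2}\big)^{1/p}$ for $p\ne0$, $A_0(x,1)=\sqrt{x}$. For $p\in(0,2/3]$ and all $x\in(0,1)$, $$A_p(x,1)<I(x,1)<A_p(x,1)^{p/\ln2}<e^{-1}2^{1/p}A_p(x,1),$$ and the coefficients $1$ and $e^{-1}2^{1/p}$ are best possible, i.e. $1$ is the largest $c$ and $e^{-1}2^{1/p}$ is the smallest $C$ such that $cA_p(x,1)\le I(x,1)\le CA_p(x,1)$ for all $x\in(0,1)$. For $p\ge1$ all three inequalities are reversed. Moreover, for each fixed $x\in(0,1)$, $p\mapsto A_p(x,1)$ is increasing on $\mathbb R$, $p\mapsto A_p(x,1)^{p/\ln2}$ is decreasing on $\mathbb R$, and $p\mapsto e^{-1}2^{1/p}A_p(x,1)$ is decreasing on $(0,\infty)$.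
   Context: $I$ is the identric mean and $A_p$ the power mean, evaluated at $(x,1)$. *)

theory Defs
  imports Complex_Main
begin

definition identric1 :: "real \<Rightarrow> real" where
  "identric1 x = exp (x * ln x / (x - 1) - 1)"

definition powmean1 :: "real \<Rightarrow> real \<Rightarrow> real" where
  "powmean1 p x = (if p = 0 then sqrt x else ((x powr p + 1) / 2) powr (1 / p))"

end

theory Submission
  imports Defs "HOL-Analysis.Harmonic_Numbers" "HOL-Real_Asymp.Real_Asymp"
begin

lemma ln2_gt: "ln (2::real) > 2/3"
proof -
  have "ln (2::real) \<ge> (\<Sum>k<2. 2*((2-1)/(2+1))^(2*k+1) / of_nat (2*k+1))"
    using ln_approx_bounds[of 2 2] by simp
  also have "(\<Sum>k<2. 2*((2-1)/(2+1))^(2*k+1) / of_nat (2*k+1)) = (56/81::real)"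
    by (simp add: eval_nat_numeral)
  finally show ?thesis by simp
qed

lemma cont_of_deriv:
  fixes f :: "real \<Rightarrow> real"
  assumes "\<And>x. a \<le> x \<Longrightarrow> x \<le> b \<Longrightarrow> \<exists>D. (f has_real_derivative D) (at x)"
  shows "continuous_on {a..b} f"
  using assms by (meson DERIV_isCont atLeastAtMost_iff continuous_at_imp_continuous_on)

lemma incr_open:
  fixes f f' :: "real \<Rightarrow> real"
  assumes "a < b" and "\<And>x. a \<le> x \<Longrightarrow> x \<le> b \<Longrightarrow> (f has_real_derivative f' x) (at x)"
    and "\<And>x. a < x \<Longrightarrow> x < b \<Longrightarrow> f' x > 0"
  shows "f a < f b"
  apply (rule DERIV_pos_imp_increasing_open[OF assms(1)])
  subgoal for x using assms(2)[of x] assms(3)[of x] by auto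
  apply (rule cont_of_deriv) using assms(2) by blast

lemma decr_open:
  fixes f f' :: "real \<Rightarrow> real"
  assumes "a < b" and "\<And>x. a \<le> x \<Longrightarrow> x \<le> b \<Longrightarrow> (f has_real_derivative f' x) (at x)"
    and "\<And>x. a < x \<Longrightarrow> x < b \<Longrightarrow> f' x < 0"
  shows "f a > f b"
  apply (rule DERIV_neg_imp_decreasing_open[OF assms(1)])
  subgoal for x using assms(2)[of x] assms(3)[of x] by auto
  apply (rule cont_of_deriv) using assms(2) by blast

lemma sq1[simp]: "1 + x^2 \<noteq> (0::real)" "1 + x^2 > (0::real)"
  by (simp_all add: add_pos_nonneg add_nonneg_eq_0_iff)

lemma sqab[simp]: "0 < a \<Longrightarrow> 0 \<le> b \<Longrightarrow> a + b*x^2 \<noteq> (0::real)"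
  by (metis add_pos_nonneg less_irrefl mult_nonneg_nonneg zero_le_power2)

definition R1 :: "real \<Rightarrow> real" where
 "R1 t = -(2/3)*t^3 + 2/3 + ln ((1+t^2)/2) - (2/3)*t^2*(1-t^3)/(1+t^2)"

lemma R1_deriv: "(R1 has_real_derivative (2*t*(1-t)^3/(3*(1+t^2)^2))) (at t)"
proof -
  have p: "1+t^2 > 0" by (simp add: add_pos_nonneg)
  show ?thesis
  unfolding R1_def
  apply (rule derivative_eq_intros refl | (use p in \<open>simp; fail\<close>))+
  using p apply (simp add: divide_simps)
  apply algebra
  done
qed

lemma R1_neg: assumes "0 < t" "t < 1" shows "R1 t < 0"
proof -
  have "R1 t < R1 1"
    apply (rule incr_open[OF assms(2) R1_deriv])
    using assms by (auto intro!: divide_pos_pos mult_pos_pos simp: add_pos_nonneg)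
  thus ?thesis by (simp add: R1_def)
qed

definition Q1 :: "real \<Rightarrow> real" where
 "Q1 t = - ln t - (1/t^3 - 1) * (2 + 3*ln ((1+t^2)/2)) / 6"

lemma Q1_deriv: assumes "t > 0" shows "(Q1 has_real_derivative (3 * R1 t / (2*t^4))) (at t)"
proof -
  have p: "1+t^2 > 0" by (simp add: add_pos_nonneg)
  show ?thesis
  unfolding Q1_def R1_def
  apply (rule derivative_eq_intros refl | (use p assms in \<open>simp; fail\<close>))+
  using p assms apply (simp add: divide_simps)
  apply algebra
  done
qed

lemma Q1_pos: assumes "0 < t" "t < 1" shows "Q1 t > 0"
proof -
  have "Q1 t > Q1 1"
    apply (rule decr_open[OF assms(2) Q1_deriv])
    using assms R1_neg by (auto intro!: divide_neg_pos)
  thus ?thesis by (simp add: Q1_def)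
qed

lemma stol_t: fixes t :: real assumes "0 < t" "t < 1"
  shows "(3/2)*ln((1+t^2)/2) < 3*t^3*ln t/(t^3-1) - 1"
proof -
  have t3: "t^3 < 1" "0 < t^3" using assms power_strict_mono[of t 1 3] by simp_all
  have "- ln t > (1/t^3 - 1) * (2 + 3*ln ((1+t^2)/2)) / 6" using Q1_pos[OF assms] by (simp add: Q1_def)
  hence "- ln t * (6*t^3) > (1/t^3 - 1) * (2 + 3*ln ((1+t^2)/2)) / 6 * (6*t^3)"
    using t3 by (intro mult_strict_right_mono) auto
  hence "- 6*t^3*ln t > (1 - t^3) * (2 + 3*ln ((1+t^2)/2))"
    using t3 by (simp add: field_simps)
  thus ?thesis using t3 by (simp add: field_simps)
qed

definition P2 :: "real \<Rightarrow> real" where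
 "P2 t = 2 - 9*ln 2*t + 6*t^2 + (10-18*ln 2)*t^3 + (6-9*ln 2)*t^5"

lemma P2_deriv: "(P2 has_real_derivative (-9*ln 2 + 12*t + 3*(10-18*ln 2)*t^2 + 5*(6-9*ln 2)*t^4)) (at t)"
  unfolding P2_def
  apply (rule derivative_eq_intros refl | (simp; fail))+
  apply (simp add: algebra_simps)
  done

lemma P2_decr: assumes "0 \<le> a" "a < b" "b \<le> 1" shows "P2 b < P2 a"
proof (rule decr_open[OF assms(2) P2_deriv])
  fix t assume t: "a < t" "t < b"
  hence t1: "0 < t" "t < 1" using assms by auto
  define c where "c = ln (2::real)"
  have c: "c > 2/3" using ln2_gt c_def by simp
  have h1: "(30-54*c)*t^2 \<le> -6*t^2" using c by (intro mult_right_mono) auto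
  have h2: "(30-45*c)*t^4 \<le> 0" using c by (intro mult_nonpos_nonneg) auto
  have h3: "(1-t)^2 > 0" using t1 by simp
  have h4: "(1-t)^2 = 1 - 2*t + t^2" by algebra
  show "-9*ln 2 + 12*t + 3*(10-18*ln 2)*t^2 + 5*(6-9*ln 2)*t^4 < 0"
    using h1 h2 h3 h4 c unfolding c_def[symmetric] by (simp add: algebra_simps)
qed

definition R2 :: "real \<Rightarrow> real" where
 "R2 t = ln 2 * t^3 - ln (1+t^2) + (2/3)*t^2*(1-t^3)/(1+t^2)"

lemma R2_deriv: "(R2 has_real_derivative (-(t * P2 t)/(3*(1+t^2)^2))) (at t)"
  unfolding R2_def P2_def
  apply (rule derivative_eq_intros refl | (simp; fail))+
  apply (simp add: divide_simps)
  apply algebra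
  done

lemma R2_neg: assumes "0 < x" "x < 1" shows "R2 x < 0"
proof (cases "P2 x \<ge> 0")
  case True
  have "R2 x < R2 0"
  proof (rule decr_open[OF assms(1) R2_deriv])
    fix s assume s: "0 < s" "s < x"
    have "P2 s > P2 x" using P2_decr[of s x] s assms by auto
    thus "-(s * P2 s)/(3*(1+s^2)^2) < 0" using True s by (auto intro!: divide_neg_pos)
  qed
  thus ?thesis by (simp add: R2_def)
next
  case False
  have "R2 x < R2 1"
  proof (rule incr_open[OF assms(2) R2_deriv])
    fix s assume s: "x < s" "s < 1"
    have "P2 s < P2 x" using P2_decr[of x s] s assms by auto
    hence "s * P2 s < 0" using False s assms by (auto intro!: mult_pos_neg)
    hence "(s * P2 s)/(3*(1+s^2)^2) < 0" by (intro divide_neg_pos) auto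
    thus "-(s * P2 s)/(3*(1+s^2)^2) > 0" by simp
  qed
  thus ?thesis by (simp add: R2_def)
qed

definition Q2 :: "real \<Rightarrow> real" where
 "Q2 t = ln t + (1/t^3 - 1) * ln (1+t^2) / (3*ln 2)"

lemma Q2_deriv: assumes "t > 0" shows "(Q2 has_real_derivative (R2 t / (ln 2 * t^4))) (at t)"
  unfolding Q2_def R2_def
  apply (rule derivative_eq_intros refl | (use assms in \<open>simp; fail\<close>))+
  using assms apply (simp add: divide_simps)
  apply algebra
  done

lemma Q2_pos: assumes "0 < t" "t < 1" shows "Q2 t > 0"
proof -
  have "Q2 t > Q2 1"
    apply (rule decr_open[OF assms(2) Q2_deriv])
    using assms R2_neg by (auto intro!: divide_neg_pos)
  thus ?thesis by (simp add: Q2_def)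
qed

lemma ineq2_t: fixes t :: real assumes "0 < t" "t < 1"
  shows "3*t^3*ln t/(t^3-1) - 1 < ln((1+t^2)/2) / ln 2"
proof -
  define c where "c = ln (2::real)"
  have c: "c > 0" using ln2_gt c_def by simp
  have t3: "t^3 < 1" "0 < t^3" using assms power_strict_mono[of t 1 3] by simp_all
  have "ln t + (1/t^3 - 1) * ln (1+t^2) / (3*c) > 0" using Q2_pos[OF assms] by (simp add: Q2_def c_def)
  hence "(ln t + (1/t^3 - 1) * ln (1+t^2) / (3*c)) * (3*c*t^3) > 0"
    using t3 c by simp
  moreover have "(ln t + (1/t^3 - 1) * ln (1+t^2) / (3*c)) * (3*c*t^3) = 3*c*t^3*ln t + (1 - t^3) * ln (1+t^2)"
    using t3 c by (simp add: field_simps)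
  ultimately have A: "3*c*t^3*ln t + (1 - t^3) * ln (1+t^2) > 0" by simp
  have L: "ln((1+t^2)/2) = ln (1+t^2) - c" unfolding c_def by (simp add: ln_div add_pos_nonneg)
  have e: "ln (1+t^2) / c - 3*t^3*ln t/(t^3-1) = (3*c*t^3*ln t + (1 - t^3) * ln (1+t^2)) / (c*(1-t^3))"
    using t3 c by (simp add: field_simps)
  have "(3*c*t^3*ln t + (1 - t^3) * ln (1+t^2)) / (c*(1-t^3)) > 0"
    using A t3 c by (intro divide_pos_pos) auto
  hence "3*t^3*ln t/(t^3-1) < ln (1+t^2) / c" using e by linarith
  moreover have "ln((1+t^2)/2) / c = ln (1+t^2) / c - 1" unfolding L using c by (simp add: field_simps)
  ultimately show ?thesis unfolding c_def[symmetric] by linarith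
qed

definition R3 :: "real \<Rightarrow> real" where
 "R3 x = x - 1 - ln ((1+x)/2) + x*(1-x)/(1+x)"

lemma R3_deriv: assumes "x > -1" shows "(R3 has_real_derivative ((1-x)/(1+x)^2)) (at x)"
proof -
  have p: "1 + x > 0" "1 + x \<noteq> 0" using assms by auto
  show ?thesis
  unfolding R3_def
  apply (rule derivative_eq_intros refl | (use p in \<open>simp; fail\<close>))+
  using p apply (simp add: divide_simps)
  apply algebra
  done
qed

lemma R3_neg: assumes "0 < x" "x < 1" shows "R3 x < 0"
proof -
  have "R3 x < R3 1"
    apply (rule incr_open[OF assms(2) R3_deriv])
    using assms by (auto intro!: divide_pos_pos)
  thus ?thesis by (simp add: R3_def)
qed

definition Q3 :: "real \<Rightarrow> real" where
 "Q3 x = ln x + (1/x - 1) * (1 + ln ((1+x)/2))"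

lemma Q3_deriv: assumes "x > 0" shows "(Q3 has_real_derivative (R3 x / x^2)) (at x)"
proof -
  have p: "1 + x > 0" "1 + x \<noteq> 0" using assms by auto
  show ?thesis
  unfolding Q3_def R3_def
  apply (rule derivative_eq_intros refl | (use p assms in \<open>simp; fail\<close>))+
  using p assms apply (simp add: divide_simps)
  apply algebra
  done
qed

lemma ineq3_x: fixes x :: real assumes "0 < x" "x < 1"
  shows "x*ln x/(x-1) - 1 < ln((1+x)/2)"
proof -
  have "Q3 x > Q3 1"
    apply (rule decr_open[OF assms(2) Q3_deriv])
    using assms R3_neg by (auto intro!: divide_neg_pos)
  hence "ln x + (1/x - 1) * (1 + ln ((1+x)/2)) > 0" by (simp add: Q3_def)
  hence "(ln x + (1/x - 1) * (1 + ln ((1+x)/2))) * x > 0" using assms by simp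
  moreover have "(ln x + (1/x - 1) * (1 + ln ((1+x)/2))) * x = x * ln x + (1 - x) * (1 + ln ((1+x)/2))"
    using assms by (simp add: field_simps)
  ultimately have "x * ln x + (1 - x) * (1 + ln ((1+x)/2)) > 0" by simp
  hence "x*ln x/(x-1) < 1 + ln((1+x)/2)" using assms
    by (subst neg_divide_less_eq) (auto simp: algebra_simps)
  thus ?thesis by simp
qed

definition R4 :: "real \<Rightarrow> real" where
 "R4 x = - ln 2 * x + ln (1+x) - x*(1-x)/(1+x)"

definition q4 :: "real \<Rightarrow> real" where
 "q4 x = - ln 2 + (3 - 2*ln 2)*x + (1 - ln 2)*x^2"

lemma R4_deriv: assumes "x > -1" shows "(R4 has_real_derivative (q4 x/(1+x)^2)) (at x)"
proof -
  have p: "1 + x > 0" "1 + x \<noteq> 0" using assms by auto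
  show ?thesis
  unfolding R4_def q4_def
  apply (rule derivative_eq_intros refl | (use p in \<open>simp; fail\<close>))+
  using p apply (simp add: divide_simps)
  apply algebra
  done
qed

lemma q4_mono: assumes "0 \<le> a" "a < b" shows "q4 a < q4 b"
proof -
  have c: "ln (2::real) < 1" by (rule ln_2_less_1)
  have "q4 b - q4 a = (b - a) * ((3 - 2*ln 2) + (1 - ln 2)*(a+b))"
    unfolding q4_def by algebra
  moreover have "(1 - ln 2)*(a+b) \<ge> 0" using c assms by auto
  hence "(3 - 2*ln 2) + (1 - ln 2)*(a+b) > 0" using c by linarith
  ultimately have "q4 b - q4 a > 0" using assms by (simp add: mult_pos_pos)
  thus ?thesis by simp
qed

lemma R4_neg: assumes "0 < x" "x < 1" shows "R4 x < 0"
proof (cases "q4 x \<ge> 0")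
  case True
  have "R4 x < R4 1"
  proof (rule incr_open[OF assms(2) R4_deriv])
    fix s assume s: "x < s" "s < 1"
    have "q4 s > q4 x" using q4_mono[of x s] s assms by auto
    thus "q4 s/(1+s)^2 > 0" using True s assms by (auto intro!: divide_pos_pos)
  qed (use assms in auto)
  thus ?thesis by (simp add: R4_def)
next
  case False
  have "R4 x < R4 0"
  proof (rule decr_open[OF assms(1) R4_deriv])
    fix s assume s: "0 < s" "s < x"
    have "q4 s < q4 x" using q4_mono[of s x] s assms by auto
    thus "q4 s/(1+s)^2 < 0" using False s assms by (auto intro!: divide_neg_pos)
  qed (use assms in auto)
  thus ?thesis by (simp add: R4_def)
qed

definition Q4 :: "real \<Rightarrow> real" where
 "Q4 x = - ln x - (1/x - 1) * ln (1+x) / ln 2"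

lemma Q4_deriv: assumes "x > 0" shows "(Q4 has_real_derivative (R4 x / (ln 2 * x^2))) (at x)"
proof -
  have p: "1 + x > 0" "1 + x \<noteq> 0" using assms by auto
  show ?thesis
  unfolding Q4_def R4_def
  apply (rule derivative_eq_intros refl | (use p assms in \<open>simp; fail\<close>))+
  using p assms apply (simp add: divide_simps)
  apply algebra
  done
qed

lemma ineq4_x: fixes x :: real assumes "0 < x" "x < 1"
  shows "ln((1+x)/2) / ln 2 < x*ln x/(x-1) - 1"
proof -
  define c where "c = ln (2::real)"
  have c: "c > 0" using ln2_gt c_def by simp
  have "Q4 x > Q4 1"
    apply (rule decr_open[OF assms(2) Q4_deriv])
    using assms R4_neg by (auto intro!: divide_neg_pos)
  hence "- ln x - (1/x - 1) * ln (1+x) / c > 0" by (simp add: Q4_def c_def)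
  hence "(- ln x - (1/x - 1) * ln (1+x) / c) * (c*x) > 0" using assms c by simp
  moreover have "(- ln x - (1/x - 1) * ln (1+x) / c) * (c*x) = - c * x * ln x - (1 - x) * ln (1+x)"
    using assms c by (simp add: field_simps)
  ultimately have A: "- c * x * ln x - (1 - x) * ln (1+x) > 0" by simp
  have L: "ln((1+x)/2) = ln (1+x) - c" unfolding c_def using assms by (simp add: ln_div)
  have e: "x*ln x/(x-1) - ln (1+x) / c = (- c * x * ln x - (1 - x) * ln (1+x)) / (c*(1-x))"
    using assms c by (simp add: field_simps)
  have "(- c * x * ln x - (1 - x) * ln (1+x)) / (c*(1-x)) > 0"
    using A assms c by (intro divide_pos_pos) auto
  hence "ln (1+x) / c < x*ln x/(x-1)" using e by linarith
  moreover have "ln((1+x)/2) / c = ln (1+x) / c - 1" unfolding L using c by (simp add: field_simps)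
  ultimately show ?thesis unfolding c_def[symmetric] by linarith
qed

lemma conv_key:
  fixes a r :: real assumes a: "a > 0" "a \<noteq> 1" and r: "r > 1"
  shows "((a+1)/2) powr r < (a powr r + 1)/2"
proof -
  define k where "k s = (s powr r + 1)/2 - ((s+1)/2) powr r" for s :: real
  have kd: "(k has_real_derivative (r/2) * (s powr (r-1) - ((s+1)/2) powr (r-1))) (at s)" if "s > 0" for s
  proof -
    have p: "(s+1)/2 > 0" using that by simp
    show ?thesis unfolding k_def
      apply (rule derivative_eq_intros refl | (use that p in \<open>simp; fail\<close>))+
      using that p apply (simp add: powr_diff field_simps)
      done
  qed
  have k1: "k 1 = 0" by (simp add: k_def)
  show ?thesis
  proof (cases "a < 1")
    case True
    have "k 1 < k a"
    proof (rule decr_open[OF True kd])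
      fix s assume s: "a < s" "s < 1"
      have "s powr (r-1) < ((s+1)/2) powr (r-1)"
        using s a r by (intro powr_less_mono2) auto
      thus "(r/2) * (s powr (r-1) - ((s+1)/2) powr (r-1)) < 0" using r by (intro mult_pos_neg) auto
    qed (use a in auto)
    thus ?thesis using k1 by (simp add: k_def)
  next
    case False
    hence a1: "1 < a" using a by auto
    have "k 1 < k a"
    proof (rule incr_open[OF a1 kd])
      fix s assume s: "1 < s" "s < a"
      have "((s+1)/2) powr (r-1) < s powr (r-1)"
        using s a r by (intro powr_less_mono2) auto
      thus "(r/2) * (s powr (r-1) - ((s+1)/2) powr (r-1)) > 0" using r by (intro mult_pos_pos) auto
    qed (use a in auto)
    thus ?thesis using k1 by (simp add: k_def)
  qed
qed

lemma amgm_strict: fixes y :: real assumes "y > 0" "y \<noteq> 1" shows "y powr (1/2) < (y+1)/2"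
proof -
  have s: "sqrt y \<noteq> 1" "sqrt y \<ge> 0" using assms by auto
  have "(sqrt y - 1)^2 > 0" using s by simp
  hence "2 * sqrt y < y + 1" using assms by (simp add: power2_eq_square algebra_simps)
  thus ?thesis using assms by (simp add: powr_half_sqrt)
qed

lemma pm_nz: "p \<noteq> 0 \<Longrightarrow> powmean1 p x = ((x powr p + 1)/2) powr (1/p)"
  by (simp add: powmean1_def)

lemma pm_pos: assumes "x > 0" shows "powmean1 p x > 0"
proof (cases "p = 0")
  case True thus ?thesis using assms by (simp add: powmean1_def)
next
  case False
  have "(x powr p + 1)/2 > 0" using assms by (simp add: add_pos_nonneg)
  thus ?thesis using False by (simp add: pm_nz)
qed

lemma mono_pos: fixes x p q :: real assumes x: "x > 0" "x \<noteq> 1" and pq: "0 < p" "p < q"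
  shows "powmean1 p x < powmean1 q x"
proof -
  define a where "a = x powr p"
  have a: "a > 0" "a \<noteq> 1" using x pq by (auto simp: a_def powr_inj[of x p 0, simplified])
  have ar: "a powr (q/p) = x powr q" using pq by (simp add: a_def powr_powr)
  have "((a+1)/2) powr (q/p) < (x powr q + 1)/2"
    using conv_key[OF a, of "q/p"] pq ar by simp
  hence "(((a+1)/2) powr (q/p)) powr (1/q) < ((x powr q + 1)/2) powr (1/q)"
    using pq a by (intro powr_less_mono2) (auto simp: add_pos_nonneg)
  moreover have "(((a+1)/2) powr (q/p)) powr (1/q) = ((a+1)/2) powr (1/p)"
    using pq by (simp add: powr_powr)
  ultimately show ?thesis using pq by (simp add: pm_nz a_def)
qed

lemma mono_neg: fixes x p q :: real assumes x: "x > 0" "x \<noteq> 1" and pq: "p < q" "q < 0"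
  shows "powmean1 p x < powmean1 q x"
proof -
  define a where "a = x powr q"
  have a: "a > 0" "a \<noteq> 1" using x pq by (auto simp: a_def powr_inj[of x q 0, simplified])
  have ar: "a powr (p/q) = x powr p" using pq by (simp add: a_def powr_powr)
  have r: "p/q > 1" using pq by (simp add: less_divide_eq_1_neg)
  have "((a+1)/2) powr (p/q) < (x powr p + 1)/2"
    using conv_key[OF a r] ar by simp
  hence "((x powr p + 1)/2) powr (1/p) < (((a+1)/2) powr (p/q)) powr (1/p)"
    using pq a by (intro powr_less_mono2_neg) (auto simp: add_pos_nonneg)
  moreover have "(((a+1)/2) powr (p/q)) powr (1/p) = ((a+1)/2) powr (1/q)"
    using pq by (simp add: powr_powr)
  ultimately show ?thesis using pq by (simp add: pm_nz a_def)
qed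

lemma mono_zero_pos: fixes x q :: real assumes x: "x > 0" "x \<noteq> 1" and q: "0 < q"
  shows "powmean1 0 x < powmean1 q x"
proof -
  define a where "a = x powr q"
  have a: "a > 0" "a \<noteq> 1" using x q by (auto simp: a_def powr_inj[of x q 0, simplified])
  have "a powr (1/2) < (a+1)/2" by (rule amgm_strict[OF a])
  hence "(a powr (1/2)) powr (1/q) < ((a+1)/2) powr (1/q)"
    using q a by (intro powr_less_mono2) auto
  moreover have "(a powr (1/2)) powr (1/q) = sqrt x"
    using q x by (simp add: a_def powr_powr powr_half_sqrt)
  ultimately show ?thesis using q by (simp add: pm_nz a_def powmean1_def)
qed

lemma mono_neg_zero: fixes x p :: real assumes x: "x > 0" "x \<noteq> 1" and p: "p < 0"
  shows "powmean1 p x < powmean1 0 x"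
proof -
  define a where "a = x powr p"
  have a: "a > 0" "a \<noteq> 1" using x p by (auto simp: a_def powr_inj[of x p 0, simplified])
  have "a powr (1/2) < (a+1)/2" by (rule amgm_strict[OF a])
  hence "((a+1)/2) powr (1/p) < (a powr (1/2)) powr (1/p)"
    using p a by (intro powr_less_mono2_neg) auto
  moreover have "(a powr (1/2)) powr (1/p) = sqrt x"
    using p x by (simp add: a_def powr_powr powr_half_sqrt)
  ultimately show ?thesis using p by (simp add: pm_nz a_def powmean1_def)
qed

lemma mono_all: fixes x p q :: real assumes x: "x > 0" "x \<noteq> 1" and pq: "p < q"
  shows "powmean1 p x < powmean1 q x"
proof -
  consider "0 < p" | "p = 0" | "p < 0 \<and> q < 0" | "p < 0 \<and> q = 0" | "p < 0 \<and> q > 0" using pq by linarith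
  thus ?thesis
  proof cases
    case 1 thus ?thesis using mono_pos[OF x 1 pq] by simp
  next
    case 2 thus ?thesis using mono_zero_pos[OF x] pq by simp
  next
    case 3 thus ?thesis using mono_neg[OF x pq] by simp
  next
    case 4 thus ?thesis using mono_neg_zero[OF x] by simp
  next
    case 5 thus ?thesis using mono_neg_zero[OF x, of p] mono_zero_pos[OF x, of q] by simp
  qed
qed

lemma B_form: fixes x p :: real assumes x: "x > 0"
  shows "powmean1 p x powr (p / ln 2) = ((x powr p + 1)/2) powr (1 / ln 2)"
proof (cases "p = 0")
  case True thus ?thesis using x by (simp add: powmean1_def)
next
  case False thus ?thesis by (simp add: pm_nz powr_powr)
qed

lemma mono_B: fixes x p q :: real assumes x: "0 < x" "x < 1" and pq: "p < q"
  shows "powmean1 q x powr (q / ln 2) < powmean1 p x powr (p / ln 2)"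
proof -
  have "x powr q < x powr p" using x pq by (rule powr_less_mono')
  hence "((x powr q + 1)/2) powr (1 / ln 2) < ((x powr p + 1)/2) powr (1 / ln 2)"
    using x by (intro powr_less_mono2) (auto simp: add_pos_nonneg)
  thus ?thesis using x by (simp add: B_form)
qed

lemma norm_form: fixes x p :: real assumes "p \<noteq> 0" "x > 0"
  shows "exp (-1) * 2 powr (1/p) * powmean1 p x = exp (-1) * (x powr p + 1) powr (1/p)"
proof -
  have "2 powr (1/p) * ((x powr p + 1)/2) powr (1/p) = (2 * ((x powr p + 1)/2)) powr (1/p)"
    by (rule powr_mult[symmetric])
  also have "2 * ((x powr p + 1)/2) = x powr p + 1" by simp
  finally show ?thesis using assms by (simp add: pm_nz)
qed

lemma frac_facts: fixes X :: real assumes "X > 0"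
  shows "0 < X/(X+1)" "X/(X+1) < 1" "0 < 1/(X+1)" "1/(X+1) < 1" "X/(X+1) + 1/(X+1) = 1"
proof -
  have p: "X + 1 > 0" using assms by simp
  show "0 < X/(X+1)" "0 < 1/(X+1)" using assms p by auto
  show "X/(X+1) < 1" "1/(X+1) < 1" using assms p by (simp_all add: divide_less_eq)
  show "X/(X+1) + 1/(X+1) = 1" using p by (simp add: add_divide_distrib[symmetric])
qed

lemma mono_K: fixes x p q :: real assumes x: "0 < x" "x < 1" and pq: "0 < p" "p < q"
  shows "exp (-1) * 2 powr (1 / q) * powmean1 q x < exp (-1) * 2 powr (1 / p) * powmean1 p x"
proof -
  define s where "s = x powr p + 1"
  have s: "s > 1" using x by (simp add: s_def)
  define a where "a = x powr p / s"
  define b where "b = 1 / s"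
  have X: "x powr p > 0" using x by simp
  have ab: "0 < a" "a < 1" "0 < b" "b < 1" "a + b = 1"
    unfolding a_def b_def s_def using frac_facts[OF X] by auto
  have r: "q/p > 1" using pq by simp
  have "a powr (q/p) < a powr 1" using ab r by (intro powr_less_mono') auto
  moreover have "b powr (q/p) < b powr 1" using ab r by (intro powr_less_mono') auto
  ultimately have "a powr (q/p) + b powr (q/p) < 1" using ab by simp
  moreover have "a powr (q/p) + b powr (q/p) = (x powr q + 1) / s powr (q/p)"
    using s x pq by (simp add: a_def b_def powr_divide powr_powr add_divide_distrib)
  ultimately have "(x powr q + 1) < s powr (q/p)" using s by (simp add: divide_less_eq)
  hence "(x powr q + 1) powr (1/q) < (s powr (q/p)) powr (1/q)"
    using pq by (intro powr_less_mono2) (auto simp: add_pos_nonneg)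
  also have "(s powr (q/p)) powr (1/q) = s powr (1/p)" using pq by (simp add: powr_powr)
  finally have "(x powr q + 1) powr (1/q) < (x powr p + 1) powr (1/p)" by (simp add: s_def)
  thus ?thesis using pq x by (simp add: norm_form)
qed

lemma pos_facts[simp]: "0 < (t::real)^2 + 1" "0 < (x::real) powr p + 1" "(x::real) powr p + 1 \<noteq> 0"
proof -
  have "0 \<le> t^2" "0 \<le> x powr p" by simp_all
  thus "0 < (t::real)^2 + 1" "0 < (x::real) powr p + 1" "(x::real) powr p + 1 \<noteq> 0" by linarith+
qed

lemma cube_root_ex: fixes x :: real assumes "0 < x" "x < 1"
  obtains t where "x = t^3" "0 < t" "t < 1"
proof
  define t where "t = x powr (1/3)"
  show "0 < t" using assms by (simp add: t_def)
  have "t < 1 powr (1/3)" unfolding t_def using assms by (intro powr_less_mono2) auto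
  thus "t < 1" by simp
  have "t^3 = t powr (real 3)" using \<open>0 < t\<close> by (simp add: powr_realpow)
  also have "\<dots> = x" using assms by (simp add: t_def powr_powr)
  finally show "x = t^3" by simp
qed

lemma cube_23: fixes t :: real assumes "t > 0" shows "(t^3) powr (2/3) = t^2"
proof -
  have "(t^3) powr (2/3) = (t powr (real 3)) powr (2/3)" using assms by (simp add: powr_realpow)
  also have "\<dots> = t powr (real 2)" by (simp add: powr_powr)
  also have "\<dots> = t^2" using assms by (simp add: powr_realpow)
  finally show ?thesis .
qed

lemma I_cube: fixes t :: real assumes "t > 0" shows "identric1 (t^3) = exp (3*t^3*ln t/(t^3-1) - 1)"
  using assms by (simp add: identric1_def ln_realpow)

lemma exp_powr: fixes y a :: real assumes "y > 0" shows "y powr a = exp (a * ln y)"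
  using assms by (simp add: powr_def)

lemma stol_x: fixes x :: real assumes "0 < x" "x < 1" shows "powmean1 (2/3) x < identric1 x"
proof -
  obtain t where t: "x = t^3" "0 < t" "t < 1" using cube_root_ex[OF assms] by blast
  have y: "(t^2+1)/2 > 0" by (simp add: add_pos_nonneg)
  have "powmean1 (2/3) x = ((t^2+1)/2) powr (3/2)" using t by (simp add: pm_nz cube_23)
  also have "\<dots> = exp ((3/2) * ln ((1+t^2)/2))" using y by (simp add: exp_powr add.commute)
  also have "\<dots> < exp (3*t^3*ln t/(t^3-1) - 1)" using stol_t[OF t(2,3)] by simp
  also have "\<dots> = identric1 x" using t by (simp add: I_cube)
  finally show ?thesis .
qed

lemma ineq2_x: fixes x :: real assumes "0 < x" "x < 1"
  shows "identric1 x < powmean1 (2/3) x powr ((2/3) / ln 2)"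
proof -
  obtain t where t: "x = t^3" "0 < t" "t < 1" using cube_root_ex[OF assms] by blast
  have y: "(t^2+1)/2 > 0" by (simp add: add_pos_nonneg)
  have "identric1 x = exp (3*t^3*ln t/(t^3-1) - 1)" using t by (simp add: I_cube)
  also have "\<dots> < exp (ln((1+t^2)/2) / ln 2)" using ineq2_t[OF t(2,3)] by simp
  also have "\<dots> = ((t^2+1)/2) powr (1 / ln 2)" using y by (simp add: exp_powr add.commute)
  also have "\<dots> = powmean1 (2/3) x powr ((2/3) / ln 2)" using t B_form[of x "2/3"] by (simp add: cube_23)
  finally show ?thesis .
qed

lemma ineq3_x': fixes x :: real assumes "0 < x" "x < 1" shows "identric1 x < powmean1 1 x"
proof -
  have "identric1 x = exp (x*ln x/(x-1) - 1)" by (simp add: identric1_def)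
  also have "\<dots> < exp (ln((1+x)/2))" using ineq3_x[OF assms] by simp
  also have "\<dots> = powmean1 1 x" using assms by (simp add: pm_nz add.commute)
  finally show ?thesis .
qed

lemma ineq4_x': fixes x :: real assumes "0 < x" "x < 1" shows "powmean1 1 x powr (1 / ln 2) < identric1 x"
proof -
  have "powmean1 1 x powr (1 / ln 2) = ((x+1)/2) powr (1 / ln 2)" using assms by (simp add: B_form)
  also have "\<dots> = exp (ln((1+x)/2) / ln 2)" using assms by (simp add: exp_powr add.commute)
  also have "\<dots> < exp (x*ln x/(x-1) - 1)" using ineq4_x[OF assms] by simp
  also have "\<dots> = identric1 x" by (simp add: identric1_def)
  finally show ?thesis .
qed

lemma third_exp: fixes x p :: real assumes x: "0 < x" "x < 1" and p: "p > 0"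
  shows "powmean1 p x powr (p / ln 2) = exp (ln ((x powr p + 1)/2) / ln 2)"
    and "exp (-1) * 2 powr (1 / p) * powmean1 p x = exp (-1 + ln 2 / p + ln ((x powr p + 1)/2) / p)"
proof -
  have y: "(x powr p + 1)/2 > 0" by (simp add: add_pos_nonneg)
  show "powmean1 p x powr (p / ln 2) = exp (ln ((x powr p + 1)/2) / ln 2)"
    using x y by (simp add: B_form exp_powr)
  show "exp (-1) * 2 powr (1 / p) * powmean1 p x = exp (-1 + ln 2 / p + ln ((x powr p + 1)/2) / p)"
    using p y by (simp add: pm_nz exp_powr exp_add[symmetric])
qed

lemma third_u: fixes x p :: real assumes x: "0 < x" "x < 1" and p: "p > 0"
  shows "ln ((x powr p + 1)/2) + ln 2 > 0"
proof -
  have "ln ((x powr p + 1)/2) + ln 2 = ln (x powr p + 1)"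
    by (simp add: ln_div add_pos_nonneg)
  moreover have "x powr p + 1 > 1" using x by simp
  ultimately show ?thesis by simp
qed

lemma third_small: fixes x p :: real assumes x: "0 < x" "x < 1" and p: "p > 0" "p < ln 2"
  shows "powmean1 p x powr (p / ln 2) < exp (-1) * 2 powr (1 / p) * powmean1 p x"
proof -
  define u where "u = ln ((x powr p + 1)/2)"
  define c where "c = ln (2::real)"
  have cu: "c + u > 0" using third_u[OF x p(1)] by (simp add: u_def c_def)
  have c: "c > 0" using ln2_gt by (simp add: c_def)
  have d: "1/p - 1/c > 0" using p c by (simp add: c_def frac_less2)
  have "(c + u) * (1/p - 1/c) > 0" using cu d by simp
  moreover have "(c + u) * (1/p - 1/c) = c/p + u/p - 1 - u/c" using c p by (simp add: field_simps)
  ultimately have "u / c < -1 + c / p + u / p" by linarith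
  thus ?thesis using third_exp[OF x p(1)] by (simp add: u_def c_def)
qed

lemma third_large: fixes x p :: real assumes x: "0 < x" "x < 1" and p: "p > ln 2"
  shows "powmean1 p x powr (p / ln 2) > exp (-1) * 2 powr (1 / p) * powmean1 p x"
proof -
  define u where "u = ln ((x powr p + 1)/2)"
  define c where "c = ln (2::real)"
  have c: "c > 0" using ln2_gt by (simp add: c_def)
  have p0: "p > 0" using p ln2_gt by linarith
  have cu: "c + u > 0" using third_u[OF x p0] by (simp add: u_def c_def)
  have d: "1/c - 1/p > 0" using p c by (simp add: c_def frac_less2)
  have "(c + u) * (1/c - 1/p) > 0" using cu d by simp
  moreover have "(c + u) * (1/c - 1/p) = 1 + u/c - c/p - u/p" using c p0 by (simp add: field_simps)
  ultimately have "u / c > -1 + c / p + u / p" by linarith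
  thus ?thesis using third_exp[OF x p0] by (simp add: u_def c_def)
qed

lemma lim_I_0: "(identric1 \<longlongrightarrow> exp (-1)) (at_right 0)"
proof -
  have "((\<lambda>x::real. x * ln x / (x - 1)) \<longlongrightarrow> 0) (at_right 0)" by real_asymp
  note h = this
  have "((\<lambda>x::real. exp (x * ln x / (x - 1) - 1)) \<longlongrightarrow> exp (- 1)) (at_right 0)"
    by real_asymp
  thus ?thesis unfolding identric1_def[abs_def] by simp
qed

lemma lim_I_1: "(identric1 \<longlongrightarrow> 1) (at_left 1)"
proof -
  have "((\<lambda>x::real. x * ln x / (x - 1)) \<longlongrightarrow> 1) (at_left 1)" by real_asymp
  note h = this
  have "((\<lambda>x::real. exp (x * ln x / (x - 1) - 1)) \<longlongrightarrow> 1) (at_left 1)"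
    by real_asymp
  thus ?thesis unfolding identric1_def[abs_def] by simp
qed

lemma lim_A_0: assumes p: "(p::real) > 0" shows "(powmean1 p \<longlongrightarrow> (1/2) powr (1/p)) (at_right 0)"
proof -
  have "((\<lambda>x::real. x powr p) \<longlongrightarrow> 0) (at_right 0)" using p by real_asymp
  hence "((\<lambda>x. ((x powr p + 1)/2) powr (1/p)) \<longlongrightarrow> ((0 + 1)/2) powr (1/p)) (at_right 0)"
    by (intro tendsto_intros) auto
  moreover have "powmean1 p = (\<lambda>x. ((x powr p + 1)/2) powr (1/p))" using p by (auto simp: pm_nz)
  ultimately show ?thesis by simp
qed

lemma lim_A_1: assumes p: "(p::real) > 0" shows "(powmean1 p \<longlongrightarrow> 1) (at_left 1)"
proof -
  have "((\<lambda>x::real. x) \<longlongrightarrow> 1) (at_left 1)" by (rule tendsto_ident_at)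
  hence "((\<lambda>x. ((x powr p + 1)/2) powr (1/p)) \<longlongrightarrow> ((1 powr p + 1)/2) powr (1/p)) (at_left 1)"
    by (intro tendsto_intros) auto
  moreover have "powmean1 p = (\<lambda>x. ((x powr p + 1)/2) powr (1/p))" using p by (auto simp: pm_nz)
  ultimately show ?thesis by simp
qed

lemma ev_left1: "eventually (\<lambda>x::real. 0 < x \<and> x < 1) (at_left 1)"
  using eventually_at_left_real[of 0 1] by simp

lemma ev_right0: "eventually (\<lambda>x::real. 0 < x \<and> x < 1) (at_right 0)"
  using eventually_at_right_real[of 0 1] by simp

lemma cset: assumes p: "(p::real) > 0" and lower: "\<And>x. 0 < x \<Longrightarrow> x < 1 \<Longrightarrow> powmean1 p x < identric1 x"
  shows "{c. \<forall>x. 0 < x \<and> x < 1 \<longrightarrow> c * powmean1 p x \<le> identric1 x} = {..1}"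
proof (intro set_eqI iffI)
  fix c assume "c \<in> {c. \<forall>x. 0 < x \<and> x < 1 \<longrightarrow> c * powmean1 p x \<le> identric1 x}"
  hence h: "\<And>x. 0 < x \<Longrightarrow> x < 1 \<Longrightarrow> c * powmean1 p x \<le> identric1 x" by auto
  have "((\<lambda>x. c * powmean1 p x) \<longlongrightarrow> c * 1) (at_left 1)"
    by (intro tendsto_intros lim_A_1 p)
  moreover have "eventually (\<lambda>x. c * powmean1 p x \<le> identric1 x) (at_left 1)"
    using ev_left1 by eventually_elim (use h in auto)
  ultimately have "c * 1 \<le> 1" using lim_I_1
    by (intro tendsto_le[of "at_left (1::real)" identric1 1 "\<lambda>x. c * powmean1 p x"]) auto
  thus "c \<in> {..1}" by simp
next
  fix c assume "c \<in> {..(1::real)}"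
  hence c: "c \<le> 1" by simp
  show "c \<in> {c. \<forall>x. 0 < x \<and> x < 1 \<longrightarrow> c * powmean1 p x \<le> identric1 x}"
  proof (intro CollectI allI impI)
    fix x :: real assume x: "0 < x \<and> x < 1"
    have "c * powmean1 p x \<le> 1 * powmean1 p x"
      using c pm_pos[of x p] x by (intro mult_right_mono) auto
    also have "\<dots> < identric1 x" using lower x by simp
    finally show "c * powmean1 p x \<le> identric1 x" by simp
  qed
qed

lemma Cset: assumes p: "(p::real) > 0"
  and upper: "\<And>x. 0 < x \<Longrightarrow> x < 1 \<Longrightarrow> identric1 x < exp (-1) * 2 powr (1 / p) * powmean1 p x"
  shows "{C. \<forall>x. 0 < x \<and> x < 1 \<longrightarrow> identric1 x \<le> C * powmean1 p x} = {exp (-1) * 2 powr (1 / p)..}"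
proof (intro set_eqI iffI)
  fix C assume "C \<in> {C. \<forall>x. 0 < x \<and> x < 1 \<longrightarrow> identric1 x \<le> C * powmean1 p x}"
  hence h: "\<And>x. 0 < x \<Longrightarrow> x < 1 \<Longrightarrow> identric1 x \<le> C * powmean1 p x" by auto
  have "((\<lambda>x. C * powmean1 p x) \<longlongrightarrow> C * (1/2) powr (1/p)) (at_right 0)"
    by (intro tendsto_intros lim_A_0 p)
  moreover have "eventually (\<lambda>x. identric1 x \<le> C * powmean1 p x) (at_right 0)"
    using ev_right0 by eventually_elim (use h in auto)
  ultimately have le: "exp (-1) \<le> C * (1/2) powr (1/p)" using lim_I_0
    by (intro tendsto_le[of "at_right (0::real)" "\<lambda>x. C * powmean1 p x" _ identric1]) auto
  have two: "2 powr (1/p) * (1/2) powr (1/p) = 1"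
    by (simp add: powr_mult[symmetric])
  have "exp (-1) * 2 powr (1/p) \<le> C * (1/2) powr (1/p) * 2 powr (1/p)"
    using le by (intro mult_right_mono) auto
  also have "\<dots> = C" using two by (simp add: mult.assoc mult.commute)
  finally show "C \<in> {exp (-1) * 2 powr (1 / p)..}" by simp
next
  fix C assume "C \<in> {exp (-1) * 2 powr (1 / p)..}"
  hence C: "exp (-1) * 2 powr (1 / p) \<le> C" by simp
  show "C \<in> {C. \<forall>x. 0 < x \<and> x < 1 \<longrightarrow> identric1 x \<le> C * powmean1 p x}"
  proof (intro CollectI allI impI)
    fix x :: real assume x: "0 < x \<and> x < 1"
    have "identric1 x < exp (-1) * 2 powr (1 / p) * powmean1 p x" using upper x by simp
    also have "\<dots> \<le> C * powmean1 p x"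
      using C pm_pos[of x p] x by (intro mult_right_mono) auto
    finally show "identric1 x \<le> C * powmean1 p x" by simp
  qed
qed

lemma small_p: fixes p x :: real assumes p: "0 < p" "p \<le> 2/3" and x: "0 < x" "x < 1"
  shows "powmean1 p x < identric1 x"
    and "identric1 x < powmean1 p x powr (p / ln 2)"
    and "powmean1 p x powr (p / ln 2) < exp (-1) * 2 powr (1 / p) * powmean1 p x"
proof -
  have x1: "x \<noteq> 1" using x by simp
  have pe: "p < 2/3 \<or> p = 2/3" using p by auto
  have "powmean1 p x \<le> powmean1 (2/3) x"
    using pe proof
    assume "p < 2/3" thus ?thesis using mono_all[OF x(1) x1, of p "2/3"] by simp
  next
    assume h: "p = 2/3" show ?thesis unfolding h by simp
  qed
  thus "powmean1 p x < identric1 x" using stol_x[OF x] by simp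
  have "powmean1 (2/3) x powr ((2/3) / ln 2) \<le> powmean1 p x powr (p / ln 2)"
    using pe proof
    assume "p < 2/3" thus ?thesis using mono_B[OF x, of p "2/3"] by simp
  next
    assume h: "p = 2/3" show ?thesis unfolding h by simp
  qed
  thus "identric1 x < powmean1 p x powr (p / ln 2)" using ineq2_x[OF x] by simp
  show "powmean1 p x powr (p / ln 2) < exp (-1) * 2 powr (1 / p) * powmean1 p x"
    using third_small[OF x p(1)] p ln2_gt by simp
qed

lemma large_p: fixes p x :: real assumes p: "1 \<le> p" and x: "0 < x" "x < 1"
  shows "powmean1 p x > identric1 x"
    and "identric1 x > powmean1 p x powr (p / ln 2)"
    and "powmean1 p x powr (p / ln 2) > exp (-1) * 2 powr (1 / p) * powmean1 p x"
proof -
  have x1: "x \<noteq> 1" using x by simp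
  have "powmean1 1 x \<le> powmean1 p x"
    using mono_all[OF x(1) x1, of 1 p] p by (cases "p = 1") auto
  thus "powmean1 p x > identric1 x" using ineq3_x'[OF x] by simp
  have "powmean1 p x powr (p / ln 2) \<le> powmean1 1 x powr (1 / ln 2)"
    using mono_B[OF x, of 1 p] p by (cases "p = 1") auto
  thus "identric1 x > powmean1 p x powr (p / ln 2)" using ineq4_x'[OF x] by simp
  show "powmean1 p x powr (p / ln 2) > exp (-1) * 2 powr (1 / p) * powmean1 p x"
    using third_large[OF x] p ln_2_less_1 by simp
qed

theorem mainTheorem10:
  shows
  "(\<forall>p. 0 < p \<and> p \<le> 2/3 \<longrightarrow>
      (\<forall>x. 0 < x \<and> x < 1 \<longrightarrow>
          powmean1 p x < identric1 x
        \<and> identric1 x < powmean1 p x powr (p / ln 2)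
        \<and> powmean1 p x powr (p / ln 2) < exp (-1) * 2 powr (1 / p) * powmean1 p x)
    \<and> {c. \<forall>x. 0 < x \<and> x < 1 \<longrightarrow> c * powmean1 p x \<le> identric1 x} = {..1}
    \<and> {C. \<forall>x. 0 < x \<and> x < 1 \<longrightarrow> identric1 x \<le> C * powmean1 p x}
        = {exp (-1) * 2 powr (1 / p)..})
 \<and> (\<forall>p. 1 \<le> p \<longrightarrow>
      (\<forall>x. 0 < x \<and> x < 1 \<longrightarrow>
          powmean1 p x > identric1 x
        \<and> identric1 x > powmean1 p x powr (p / ln 2)
        \<and> powmean1 p x powr (p / ln 2) > exp (-1) * 2 powr (1 / p) * powmean1 p x))
 \<and> (\<forall>x. 0 < x \<and> x < 1 \<longrightarrow>
      (\<forall>p q. p < q \<longrightarrow> powmean1 p x < powmean1 q x)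
    \<and> (\<forall>p q. p < q \<longrightarrow> powmean1 q x powr (q / ln 2) < powmean1 p x powr (p / ln 2))
    \<and> (\<forall>p q. 0 < p \<and> p < q \<longrightarrow>
          exp (-1) * 2 powr (1 / q) * powmean1 q x < exp (-1) * 2 powr (1 / p) * powmean1 p x))"
proof (intro conjI)
  show "\<forall>p. 0 < p \<and> p \<le> 2/3 \<longrightarrow>
      (\<forall>x. 0 < x \<and> x < 1 \<longrightarrow>
          powmean1 p x < identric1 x
        \<and> identric1 x < powmean1 p x powr (p / ln 2)
        \<and> powmean1 p x powr (p / ln 2) < exp (-1) * 2 powr (1 / p) * powmean1 p x)
    \<and> {c. \<forall>x. 0 < x \<and> x < 1 \<longrightarrow> c * powmean1 p x \<le> identric1 x} = {..1}
    \<and> {C. \<forall>x. 0 < x \<and> x < 1 \<longrightarrow> identric1 x \<le> C * powmean1 p x}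
        = {exp (-1) * 2 powr (1 / p)..}"
  proof (rule allI, rule impI)
    fix p :: real assume p: "0 < p \<and> p \<le> 2/3"
    have A: "\<forall>x. 0 < x \<and> x < 1 \<longrightarrow>
          powmean1 p x < identric1 x
        \<and> identric1 x < powmean1 p x powr (p / ln 2)
        \<and> powmean1 p x powr (p / ln 2) < exp (-1) * 2 powr (1 / p) * powmean1 p x"
      using small_p p by blast
    have B: "{c. \<forall>x. 0 < x \<and> x < 1 \<longrightarrow> c * powmean1 p x \<le> identric1 x} = {..1}"
      using cset[of p] small_p(1)[of p] p by blast
    have C: "{C. \<forall>x. 0 < x \<and> x < 1 \<longrightarrow> identric1 x \<le> C * powmean1 p x}
        = {exp (-1) * 2 powr (1 / p)..}"
      apply (rule Cset)
      using p apply simp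
      using small_p(2,3)[of p] p by (meson less_trans)
    from A B C show "(\<forall>x. 0 < x \<and> x < 1 \<longrightarrow> powmean1 p x < identric1 x \<and> identric1 x < powmean1 p x powr (p / ln 2) \<and> powmean1 p x powr (p / ln 2) < exp (-1) * 2 powr (1 / p) * powmean1 p x) \<and> {c. \<forall>x. 0 < x \<and> x < 1 \<longrightarrow> c * powmean1 p x \<le> identric1 x} = {..1} \<and> {C. \<forall>x. 0 < x \<and> x < 1 \<longrightarrow> identric1 x \<le> C * powmean1 p x} = {exp (-1) * 2 powr (1 / p)..}" by blast
  qed
  show "\<forall>p. 1 \<le> p \<longrightarrow>
      (\<forall>x. 0 < x \<and> x < 1 \<longrightarrow>
          powmean1 p x > identric1 x
        \<and> identric1 x > powmean1 p x powr (p / ln 2)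
        \<and> powmean1 p x powr (p / ln 2) > exp (-1) * 2 powr (1 / p) * powmean1 p x)"
    using large_p by blast
  show "\<forall>x. 0 < x \<and> x < 1 \<longrightarrow>
      (\<forall>p q. p < q \<longrightarrow> powmean1 p x < powmean1 q x)
    \<and> (\<forall>p q. p < q \<longrightarrow> powmean1 q x powr (q / ln 2) < powmean1 p x powr (p / ln 2))
    \<and> (\<forall>p q. 0 < p \<and> p < q \<longrightarrow>
          exp (-1) * 2 powr (1 / q) * powmean1 q x < exp (-1) * 2 powr (1 / p) * powmean1 p x)"
    using mono_all mono_B mono_K by auto
qed

end
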